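(* Let $(Y,\lambda)$ be a probability space which is divisible, and let $\{\mathcal{Y}_N\}_{N\in\mathbb{Z}}$ be a filtration of $Y$. Then there exists a collection $\{B^m_j\}$ of measurable subsets of $Y$, indexed by $m\in\{0,1,2,\dots\}$ and $1\le j\le 2^m$, such that: (1) for each $m$, $\{B^m_j:1\le j\le 2^m\}$ is a partition of $Y$ into disjoint measurable sets; (2) each $B^m_j$ is the union of precisely two sets $B^{m+1}_{j_1}$ and $B^{m+1}_{j_2}$; (3) $\lambda(B^m_j)=2^{-m}$ for all $m,j$; (4) for any filtration elements $\mathcal{Y}_M,\mathcal{Y}_N$ there exist subsets $\mathbb{N}^1,\mathbb{N}^2\subseteq\mathbb{N}$ and indices $j(m)$ ($m\in\mathbb{N}^1$), $j'(m')$ ($m'\in\mathbb{N}^2$) such that, modulo $\lambda$-null sets, $\mathcal{Y}_N\setminus\mathcal{Y}_M$ is the (empty, finite or countably infinite) union $$\mathcal{Y}_N\setminus\mathcal{Y}_M=\Big(\bigcup_{m\in\mathbb{N}^1}B^m_{j(m)}\Big)\cup\Big(\bigcup_{m'\in\mathbb{N}^2}B^{m'}_{j'(m')}\Big).$$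
   Context: A filtration of $Y$ is a family $\{\mathcal{Y}_N\}_{N\in\mathbb{Z}}$ of measurable sets with $\mathcal{Y}_N\subseteq\mathcal{Y}_{N+1}$ for all $N$. The measure space $(Y,\lambda)$ is divisible if for every measurable $S\subseteq Y$ and every $t\in[0,\lambda(S)]$ there is a measurable $S'\subseteq S$ with $\lambda(S')=t$. *)

theory Defs
  imports "HOL-Probability.Probability"
begin

definition divisible_measure :: "'a measure \<Rightarrow> bool" where
  "divisible_measure M \<longleftrightarrow>
     (\<forall>S \<in> sets M. \<forall>t::real. 0 \<le> t \<and> t \<le> measure M S \<longrightarrow>
        (\<exists>S' \<in> sets M. S' \<subseteq> S \<and> measure M S' = t))"

definition filtration_of :: "'a measure \<Rightarrow> (int \<Rightarrow> 'a set) \<Rightarrow> bool" where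
  "filtration_of M Yf \<longleftrightarrow> (\<forall>N. Yf N \<in> sets M) \<and> (\<forall>N. Yf N \<subseteq> Yf (N + 1))"

end

theory Submission
  imports Defs
begin

locale dsetting = prob_space M for M :: "'a measure" +
  fixes Yf :: "int \<Rightarrow> 'a set"
  assumes dv: "divisible_measure M" and fl: "filtration_of M Yf"
begin

lemma Yf_sets[measurable]: "Yf N \<in> sets M"
  using fl by (simp add: filtration_of_def)

lemma Yf_mono: assumes "K \<le> K'" shows "Yf K \<subseteq> Yf K'"
proof -
  obtain n where n: "K' = K + int n" using assms zle_iff_zadd by blast
  have "Yf K \<subseteq> Yf (K + int n)" for n
  proof (induction n)
    case 0 then show ?case by simp
  next
    case (Suc n)
    have "Yf (K + int n) \<subseteq> Yf (K + int n + 1)" using fl by (simp add: filtration_of_def)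
    moreover have "K + int (Suc n) = K + int n + 1" by simp
    ultimately show ?case using Suc by (metis subset_trans)
  qed
  then show ?thesis using n by simp
qed

lemma divE:
  assumes "S \<in> sets M" "0 \<le> t" "t \<le> measure M S"
  obtains S' where "S' \<in> sets M" "S' \<subseteq> S" "measure M S' = t"
  using dv assms unfolding divisible_measure_def by blast

lemma split_ex:
  assumes G: "G \<in> sets M" and t0: "0 \<le> \<tau>" and t1: "\<tau> \<le> measure M G"
  shows "\<exists>H. H \<in> sets M \<and> H \<subseteq> G \<and> measure M H = \<tau> \<and> (\<forall>N. G \<inter> Yf N \<subseteq> H \<or> H \<subseteq> Yf N)"
proof -
  define Yi where "Yi = (\<Union>N. Yf N)"
  define Yb where "Yb = (\<Inter>N. Yf N)"
  have Yi: "Yi \<in> sets M" unfolding Yi_def by measurable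
  have Yb: "Yb \<in> sets M" unfolding Yb_def by measurable
  consider (c1) "measure M (G \<inter> Yi) \<le> \<tau>" | (c2) "\<tau> \<le> measure M (G \<inter> Yb)"
    | (c3) "measure M (G \<inter> Yb) < \<tau>" "\<tau> < measure M (G \<inter> Yi)" by linarith
  then show ?thesis
  proof cases
    case c1
    have "measure M (G - Yi) = measure M G - measure M (G \<inter> Yi)"
      using finite_measure_Diff' G Yi by blast
    then obtain S where S: "S \<in> sets M" "S \<subseteq> G - Yi" "measure M S = \<tau> - measure M (G \<inter> Yi)"
      using divE[of "G - Yi" "\<tau> - measure M (G \<inter> Yi)"] c1 t1 G Yi by auto
    have "measure M ((G \<inter> Yi) \<union> S) = measure M (G \<inter> Yi) + measure M S"
      using S G Yi by (intro finite_measure_Union) auto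
    then show ?thesis using S G Yi c1
      by (intro exI[of _ "(G \<inter> Yi) \<union> S"]) (auto simp: Yi_def)
  next
    case c2
    then obtain S where S: "S \<in> sets M" "S \<subseteq> G \<inter> Yb" "measure M S = \<tau>"
      using divE[of "G \<inter> Yb" "\<tau>"] t0 G Yb by auto
    then show ?thesis by (intro exI[of _ S]) (auto simp: Yb_def)
  next
    case c3
    have "\<exists>K. measure M (G \<inter> Yf K) < \<tau>"
    proof (rule ccontr)
      assume "\<not> ?thesis"
      then have h: "\<And>K. \<tau> \<le> measure M (G \<inter> Yf K)" by (auto simp: not_less)
      define A where "A n = G \<inter> Yf (- int n)" for n
      have "decseq A" unfolding A_def decseq_def using Yf_mono
        by (metis Int_mono neg_le_iff_le of_nat_le_iff order_refl)
      moreover have "range A \<subseteq> sets M" unfolding A_def using G by auto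
      ultimately have L: "(\<lambda>n. measure M (A n)) \<longlonglongrightarrow> measure M (\<Inter>i. A i)"
        by (rule finite_Lim_measure_decseq[rotated])
      have "(\<Inter>i. A i) = G \<inter> Yb"
      proof
        show "(\<Inter>i. A i) \<subseteq> G \<inter> Yb"
        proof
          fix x assume x: "x \<in> (\<Inter>i. A i)"
          have "x \<in> Yf N" for N
          proof -
            have "x \<in> A (nat (- N))" using x by blast
            moreover have "Yf (- int (nat (- N))) \<subseteq> Yf N" by (rule Yf_mono) simp
            ultimately show ?thesis unfolding A_def by blast
          qed
          then show "x \<in> G \<inter> Yb" using x unfolding A_def Yb_def by auto
        qed
      qed (auto simp: A_def Yb_def)
      then have "\<tau> \<le> measure M (G \<inter> Yb)"
        using LIMSEQ_le_const[OF L] h unfolding A_def by auto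
      then show False using c3 by simp
    qed
    then obtain K where K: "measure M (G \<inter> Yf K) < \<tau>" by blast
    have "\<exists>N0. \<tau> < measure M (G \<inter> Yf N0)"
    proof (rule ccontr)
      assume "\<not> ?thesis"
      then have h: "\<And>K. measure M (G \<inter> Yf K) \<le> \<tau>" by (auto simp: not_less)
      define A where "A n = G \<inter> Yf (int n)" for n
      have "incseq A" unfolding A_def incseq_def using Yf_mono
        by (metis Int_mono of_nat_le_iff order_refl)
      moreover have "range A \<subseteq> sets M" unfolding A_def using G by auto
      ultimately have L: "(\<lambda>n. measure M (A n)) \<longlonglongrightarrow> measure M (\<Union>i. A i)"
        by (rule finite_Lim_measure_incseq[rotated])
      have "(\<Union>i. A i) = G \<inter> Yi"
      proof
        show "G \<inter> Yi \<subseteq> (\<Union>i. A i)"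
        proof
          fix x assume x: "x \<in> G \<inter> Yi"
          then obtain N where N: "x \<in> Yf N" unfolding Yi_def by auto
          have "Yf N \<subseteq> Yf (int (nat N))" by (rule Yf_mono) simp
          then show "x \<in> (\<Union>i. A i)" using x N unfolding A_def by blast
        qed
      qed (auto simp: A_def Yi_def)
      then have "measure M (G \<inter> Yi) \<le> \<tau>"
        using LIMSEQ_le_const2[OF L] h unfolding A_def by auto
      then show False using c3 by simp
    qed
    then obtain N0 where N0: "\<tau> < measure M (G \<inter> Yf N0)" by blast
    have KN0: "K < N0"
    proof (rule ccontr)
      assume "\<not> K < N0"
      then have "measure M (G \<inter> Yf N0) \<le> measure M (G \<inter> Yf K)"
        using Yf_mono[of N0 K] G by (intro finite_measure_mono) auto
      then show False using K N0 by simp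
    qed
    define P where "P n = (\<tau> < measure M (G \<inter> Yf (K + int n)))" for n
    have PN0: "P (nat (N0 - K))" unfolding P_def using N0 KN0 by simp
    define n where "n = (LEAST n. P n)"
    have Pn: "P n" unfolding n_def by (rule LeastI[of P, OF PN0])
    have n0: "n \<noteq> 0" using Pn K unfolding P_def by (cases n) auto
    have "\<not> P (n - 1)" unfolding n_def by (rule not_less_Least) (use n0 n_def in auto)
    define N where "N = K + int n"
    have NP: "N - 1 = K + int (n - 1)" using n0 unfolding N_def by auto
    have lo: "measure M (G \<inter> Yf (N - 1)) \<le> \<tau>" using \<open>\<not> P (n - 1)\<close> NP unfolding P_def by simp
    have hi: "\<tau> < measure M (G \<inter> Yf N)" using Pn unfolding P_def N_def by simp
    have sub: "Yf (N - 1) \<subseteq> Yf N" by (rule Yf_mono) simp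
    have "measure M (G \<inter> (Yf N - Yf (N - 1))) = measure M (G \<inter> Yf N) - measure M (G \<inter> Yf (N - 1))"
    proof -
      have "G \<inter> (Yf N - Yf (N - 1)) = (G \<inter> Yf N) - (G \<inter> Yf (N - 1))" by auto
      moreover have "G \<inter> Yf (N - 1) \<subseteq> G \<inter> Yf N" using sub by blast
      ultimately show ?thesis using G by (simp add: finite_measure_Diff)
    qed
    then obtain S where S: "S \<in> sets M" "S \<subseteq> G \<inter> (Yf N - Yf (N - 1))"
        "measure M S = \<tau> - measure M (G \<inter> Yf (N - 1))"
      using divE[of "G \<inter> (Yf N - Yf (N - 1))" "\<tau> - measure M (G \<inter> Yf (N - 1))"] lo hi G by auto
    have m: "measure M ((G \<inter> Yf (N - 1)) \<union> S) = measure M (G \<inter> Yf (N - 1)) + measure M S"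
      using S G by (intro finite_measure_Union) auto
    have compat: "G \<inter> Yf K' \<subseteq> (G \<inter> Yf (N - 1)) \<union> S \<or> (G \<inter> Yf (N - 1)) \<union> S \<subseteq> Yf K'" for K'
    proof (cases "K' \<le> N - 1")
      case True then show ?thesis using Yf_mono[OF True] by auto
    next
      case False then have "N \<le> K'" by simp
      then show ?thesis using Yf_mono[of N K'] sub S by auto
    qed
    show ?thesis using S G m compat
      by (intro exI[of _ "(G \<inter> Yf (N - 1)) \<union> S"]) auto
  qed
qed

definition hf :: "'a set \<Rightarrow> 'a set" where
  "hf G = (SOME H. H \<in> sets M \<and> H \<subseteq> G \<and> measure M H = measure M G / 2 \<and> (\<forall>N. G \<inter> Yf N \<subseteq> H \<or> H \<subseteq> Yf N))"

lemma hf: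
  assumes "G \<in> sets M"
  shows "hf G \<in> sets M \<and> hf G \<subseteq> G \<and> measure M (hf G) = measure M G / 2 \<and> (\<forall>N. G \<inter> Yf N \<subseteq> hf G \<or> hf G \<subseteq> Yf N)"
proof -
  have "\<exists>H. H \<in> sets M \<and> H \<subseteq> G \<and> measure M H = measure M G / 2 \<and> (\<forall>N. G \<inter> Yf N \<subseteq> H \<or> H \<subseteq> Yf N)"
    using assms by (intro split_ex) auto
  then show ?thesis unfolding hf_def by (rule someI_ex)
qed

primrec R :: "nat \<Rightarrow> nat \<Rightarrow> 'a set" where
  "R 0 = (\<lambda>k. if k = 0 then {} else space M)"
| "R (Suc m) = (\<lambda>k. if even k then R m (k div 2)
      else R m (k div 2) \<union> hf (R m (k div 2 + 1) - R m (k div 2)))"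

lemma R_sets[measurable]: "R m k \<in> sets M"
proof (induction m arbitrary: k)
  case 0 then show ?case by simp
next
  case (Suc m)
  then show ?case using hf[of "R m (k div 2 + 1) - R m (k div 2)"] by auto
qed

lemma R_Suc_mono: "R m k \<subseteq> R m (Suc k)"
proof (induction m arbitrary: k)
  case 0 then show ?case by simp
next
  case (Suc m)
  have h: "hf (R m (k div 2 + 1) - R m (k div 2)) \<subseteq> R m (k div 2 + 1) - R m (k div 2)"
    using hf[of "R m (k div 2 + 1) - R m (k div 2)"] by auto
  show ?case
  proof (cases "even k")
    case True
    then have "Suc k div 2 = k div 2" "\<not> even (Suc k)" by auto
    then show ?thesis using True by auto
  next
    case False
    then have "Suc k div 2 = k div 2 + 1" "even (Suc k)" by auto
    then show ?thesis using False h Suc[of "k div 2"] by auto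
  qed
qed

lemma R_mono: "k \<le> k' \<Longrightarrow> R m k \<subseteq> R m k'"
  using lift_Suc_mono_le[of "R m", OF R_Suc_mono] by blast

lemma R_zero[simp]: "R m 0 = {}"
  by (induction m) auto

lemma R_even[simp]: "R (Suc m) (2 * i) = R m i"
  by simp

lemma R_top: "2 ^ m \<le> k \<Longrightarrow> R m k = space M"
proof (induction m arbitrary: k)
  case 0 then show ?case by simp
next
  case (Suc m)
  show ?case
  proof (cases "even k")
    case True
    then show ?thesis using Suc by auto
  next
    case False
    then have "2 ^ m \<le> k div 2" using Suc.prems by auto
    then have "R m (k div 2) = space M" "R m (k div 2 + 1) = space M" using Suc.IH by auto
    then show ?thesis using False hf[of "{}"] by auto
  qed
qed

lemma R_space: "R m k \<subseteq> space M"
  using sets.sets_into_space[OF R_sets] by blast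

lemma R_measure: "k \<le> 2 ^ m \<Longrightarrow> measure M (R m k) = k / 2 ^ m"
proof (induction m arbitrary: k)
  case 0 then show ?case by (cases k) (auto simp: prob_space)
next
  case (Suc m)
  show ?case
  proof (cases "even k")
    case True
    then obtain i where i: "k = 2 * i" by blast
    then have "i \<le> 2 ^ m" using Suc.prems by auto
    then show ?thesis using Suc.IH i by simp
  next
    case False
    then obtain i where i: "k = 2 * i + 1" using oddE by blast
    then have ii: "i + 1 \<le> 2 ^ m" using Suc.prems by auto
    have kd: "k div 2 = i" using i by simp
    let ?G = "R m (i + 1) - R m i"
    have G: "?G \<in> sets M" by measurable
    have mG: "measure M ?G = 1 / 2 ^ m"
      using Suc.IH[OF ii] Suc.IH[of i] ii R_mono[of i "i+1" m]
      by (simp add: finite_measure_Diff diff_divide_distrib[symmetric])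
    have h: "hf ?G \<in> sets M" "hf ?G \<subseteq> ?G" "measure M (hf ?G) = measure M ?G / 2"
      using hf[OF G] by auto
    have "R (Suc m) k = R m i \<union> hf ?G" using False kd by simp
    also have "measure M \<dots> = measure M (R m i) + measure M (hf ?G)"
      using h by (intro finite_measure_Union) auto
    also have "\<dots> = i / 2 ^ m + 1 / 2 ^ (Suc m)"
      using Suc.IH[of i] ii h(3) mG by simp
    also have "\<dots> = k / 2 ^ Suc m" using i by (simp add: field_simps)
    finally show ?thesis .
  qed
qed

lemma R_comp: "R m k \<subseteq> Yf N \<or> Yf N \<subseteq> R m k"
proof (induction m arbitrary: k)
  case 0 then show ?case using sets.sets_into_space[OF Yf_sets] by auto
next
  case (Suc m)
  show ?case
  proof (cases "even k")
    case True then show ?thesis using Suc by simp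
  next
    case False
    let ?i = "k div 2"
    let ?G = "R m (?i + 1) - R m ?i"
    have h: "hf ?G \<subseteq> ?G" "?G \<inter> Yf N \<subseteq> hf ?G \<or> hf ?G \<subseteq> Yf N"
      using hf[of ?G] by auto
    have eq: "R (Suc m) k = R m ?i \<union> hf ?G" using False by simp
    show ?thesis
    proof (cases "R m (?i + 1) \<subseteq> Yf N")
      case True then show ?thesis using eq h R_mono[of ?i "?i+1" m] by auto
    next
      case F1: False
      then have s1: "Yf N \<subseteq> R m (?i + 1)" using Suc.IH by blast
      show ?thesis
      proof (cases "Yf N \<subseteq> R m ?i")
        case True then show ?thesis using eq by auto
      next
        case False
        then have "R m ?i \<subseteq> Yf N" using Suc.IH by blast
        then show ?thesis using eq h s1 by blast
      qed
    qed
  qed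
qed

declare R.simps(2)[simp del]

definition B :: "nat \<Rightarrow> nat \<Rightarrow> 'a set" where
  "B m j = R m j - R m (j - 1)"

lemma B_sets[measurable]: "B m j \<in> sets M"
  unfolding B_def by measurable

lemma B_disj: "1 \<le> j \<Longrightarrow> 1 \<le> k \<Longrightarrow> j \<noteq> k \<Longrightarrow> B m j \<inter> B m k = {}"
proof -
  have *: "B m j \<inter> B m k = {}" if "1 \<le> j" "j < k" for j k
  proof -
    have "j \<le> k - 1" using that by simp
    then show ?thesis using R_mono[of j "k - 1" m] that unfolding B_def by auto
  qed
  assume "1 \<le> j" "1 \<le> k" "j \<noteq> k"
  then show ?thesis using *[of j k] *[of k j] by (cases "j < k") auto
qed

lemma B_Union: "(\<Union>j \<in> {1..n}. B m j) = R m n"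
proof (induction n)
  case 0 then show ?case by simp
next
  case (Suc n)
  have "{1..Suc n} = insert (Suc n) {1..n}" by auto
  then show ?case using Suc R_mono[of n "Suc n" m] unfolding B_def by auto
qed

lemma B_split: "1 \<le> j \<Longrightarrow> B m j = B (Suc m) (2 * j - 1) \<union> B (Suc m) (2 * j)"
proof -
  assume j: "1 \<le> j"
  have e: "2 * j - 1 - 1 = 2 * (j - 1)" using j by simp
  have a: "R (Suc m) (2 * j - 1 - 1) = R m (j - 1)"
    unfolding e by (rule R_even)
  have b: "2 * j - 1 = 2 * j - 1" ..
  have "R (Suc m) (2 * j - 1) \<subseteq> R (Suc m) (2 * j)" by (rule R_mono) simp
  moreover have "R (Suc m) (2 * j - 1 - 1) \<subseteq> R (Suc m) (2 * j - 1)" by (rule R_mono) simp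
  moreover have "2 * j - 1 = 2 * j - 1" ..
  ultimately show ?thesis unfolding B_def using a j
    by (auto simp del: R.simps)
qed

lemma B_measure: "1 \<le> j \<Longrightarrow> j \<le> 2 ^ m \<Longrightarrow> measure M (B m j) = 1 / 2 ^ m"
proof -
  assume j: "1 \<le> j" "j \<le> 2 ^ m"
  have "measure M (B m j) = measure M (R m j) - measure M (R m (j - 1))"
    unfolding B_def using R_mono[of "j - 1" j m] by (intro finite_measure_Diff) auto
  also have "\<dots> = j / 2 ^ m - (j - 1) / 2 ^ m"
    using j R_measure[of j m] R_measure[of "j - 1" m] by (simp add: of_nat_diff)
  also have "\<dots> = 1 / 2 ^ m" using j by (simp add: of_nat_diff diff_divide_distrib[symmetric])
  finally show ?thesis .
qed

lemma B_parent:
  assumes "1 \<le> j"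
  shows "B (Suc m) j \<subseteq> B m ((j + 1) div 2)"
proof -
  let ?p = "(j + 1) div 2"
  have "R (Suc m) j \<subseteq> R (Suc m) (2 * ?p)" by (rule R_mono) simp
  moreover have "R (Suc m) (2 * (?p - 1)) \<subseteq> R (Suc m) (j - 1)" by (rule R_mono) simp
  ultimately show ?thesis unfolding B_def by (simp only: R_even) blast
qed

lemma part4:
  "\<exists>(N1 :: nat set) (N2 :: nat set) (jj1 :: nat \<Rightarrow> nat) (jj2 :: nat \<Rightarrow> nat).
        (\<forall>m \<in> N1. jj1 m \<in> {1..2^m}) \<and> (\<forall>m \<in> N2. jj2 m \<in> {1..2^m}) \<and>
        (let A = Yf Ni - Yf Mi;
             U = (\<Union>m \<in> N1. B m (jj1 m)) \<union> (\<Union>m \<in> N2. B m (jj2 m))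
         in (A - U) \<union> (U - A) \<in> null_sets M)"
proof -
  define kN where "kN m = (GREATEST k. k \<le> 2^m \<and> R m k \<subseteq> Yf Ni)" for m
  define kM where "kM m = (LEAST k. Yf Mi \<subseteq> R m k)" for m
  define ins where "ins m j \<longleftrightarrow> 1 \<le> j \<and> j \<le> 2^m \<and> R m j \<subseteq> Yf Ni \<and> Yf Mi \<subseteq> R m (j - 1)" for m j
  define N1 where "N1 = {m. ins m (kM m + 1)}"
  define N2 where "N2 = {m. ins m (kN m)}"
  define jj1 where "jj1 m = kM m + 1" for m
  define A where "A = Yf Ni - Yf Mi"
  define U where "U = (\<Union>m \<in> N1. B m (jj1 m)) \<union> (\<Union>m \<in> N2. B m (kN m))"
  have kN_le: "kN m \<le> 2^m" and kN_sub: "R m (kN m) \<subseteq> Yf Ni" for m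
    using GreatestI_nat[of "\<lambda>k. k \<le> 2^m \<and> R m k \<subseteq> Yf Ni" 0 "2^m"] unfolding kN_def by auto
  have kN_max: "k \<le> kN m" if "k \<le> 2^m" "R m k \<subseteq> Yf Ni" for m k
    using Greatest_le_nat[of "\<lambda>k. k \<le> 2^m \<and> R m k \<subseteq> Yf Ni" k "2^m"] that unfolding kN_def by auto
  have YM_top: "Yf Mi \<subseteq> R m (2^m)" for m
    using R_top[of m "2^m"] sets.sets_into_space[OF Yf_sets] by auto
  have kM_sub: "Yf Mi \<subseteq> R m (kM m)" for m
    unfolding kM_def by (rule LeastI[of "\<lambda>k. Yf Mi \<subseteq> R m k", OF YM_top])
  have kM_le: "kM m \<le> 2^m" for m
    unfolding kM_def by (rule Least_le[of "\<lambda>k. Yf Mi \<subseteq> R m k", OF YM_top])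
  have kM_min: "\<not> Yf Mi \<subseteq> R m k" if "k < kM m" for m k
    using not_less_Least[of k "\<lambda>k. Yf Mi \<subseteq> R m k"] that unfolding kM_def by auto
  have kM_min': "kM m \<le> k" if "Yf Mi \<subseteq> R m k" for m k
    using kM_min[of k m] that by force
  have ins_sub: "B m j \<subseteq> A" if "ins m j" for m j
    using that unfolding ins_def B_def A_def by auto
  have U_sub: "U \<subseteq> A"
    unfolding U_def N1_def N2_def jj1_def using ins_sub by blast
  have key: "ins m j \<Longrightarrow> B m j \<subseteq> U" for m j
  proof (induction m arbitrary: j)
    case 0
    then have j: "j = 1" unfolding ins_def by auto
    have "R 0 1 \<subseteq> Yf Ni" using 0 j unfolding ins_def by simp
    then have "1 \<le> kN 0" using kN_max[of 1 0] by simp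
    then have "kN 0 = 1" using kN_le[of 0] by simp
    then have "0 \<in> N2" using 0 j unfolding N2_def by simp
    then show ?case using \<open>kN 0 = 1\<close> j unfolding U_def by auto
  next
    case (Suc m)
    let ?p = "(j + 1) div 2"
    have j1: "1 \<le> j" "j \<le> 2 ^ Suc m" and jN: "R (Suc m) j \<subseteq> Yf Ni"
      and jM: "Yf Mi \<subseteq> R (Suc m) (j - 1)" using Suc.prems[unfolded ins_def] by blast+
    have p1: "1 \<le> ?p" "?p \<le> 2 ^ m" using j1 by auto
    show ?case
    proof (cases "ins m ?p")
      case True
      then show ?thesis using Suc.IH[OF True] B_parent[OF j1(1), of m] by blast
    next
      case nins: False
      show ?thesis
      proof (cases "even j")
        case False
        define p where "p = ?p"
        have jp: "j = 2 * p - 1" "p = ?p" "1 \<le> p" using False p1 unfolding p_def by presburger+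
        have "j - 1 = 2 * (p - 1)" using jp(1) jp(3) by arith
        then have "Yf Mi \<subseteq> R m (p - 1)" using jM by simp
        moreover have "\<not> ins m p" using nins unfolding p_def .
        moreover have "1 \<le> p" "p \<le> 2 ^ m" using p1 unfolding p_def by blast+
        ultimately have nN: "\<not> R m p \<subseteq> Yf Ni" using ins_def[of m p] by blast
        have "j \<le> kN (Suc m)" using kN_max j1 jN by blast
        moreover have "kN (Suc m) \<le> j"
        proof (rule ccontr)
          assume "\<not> kN (Suc m) \<le> j"
          then have "2 * p \<le> kN (Suc m)" using jp(1) jp(3) by arith
          then have "R (Suc m) (2 * p) \<subseteq> Yf Ni" using R_mono kN_sub by blast
          then show False using nN unfolding R_even by blast
        qed
        ultimately have "kN (Suc m) = j" by simp
        then have "Suc m \<in> N2" using Suc.prems unfolding N2_def by simp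
        then show ?thesis using \<open>kN (Suc m) = j\<close> unfolding U_def by blast
      next
        case True
        define p where "p = ?p"
        have jp: "j = 2 * p" "p = ?p" "1 \<le> p" using True p1 unfolding p_def by presburger+
        have "R m p \<subseteq> Yf Ni" using jN unfolding jp(1) R_even .
        moreover have "\<not> ins m p" using nins unfolding p_def .
        moreover have "1 \<le> p" "p \<le> 2 ^ m" using p1 unfolding p_def by blast+
        ultimately have nM: "\<not> Yf Mi \<subseteq> R m (p - 1)" using ins_def[of m p] by blast
        have "kM (Suc m) \<le> j - 1" using kM_min' jM by blast
        moreover have "j - 1 \<le> kM (Suc m)"
        proof (rule ccontr)
          assume "\<not> j - 1 \<le> kM (Suc m)"
          then have "kM (Suc m) \<le> 2 * (p - 1)" using jp(1) jp(3) by arith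
          then have "Yf Mi \<subseteq> R (Suc m) (2 * (p - 1))" using R_mono kM_sub by blast
          then show False using nM unfolding R_even by blast
        qed
        ultimately have "jj1 (Suc m) = j" unfolding jj1_def using j1 by simp
        then have "Suc m \<in> N1" using Suc.prems unfolding N1_def jj1_def by simp
        then show ?thesis using \<open>jj1 (Suc m) = j\<close> unfolding U_def by blast
      qed
    qed
  qed
  have Usets: "U \<in> sets M" unfolding U_def by measurable
  have AU: "A - U \<in> sets M" using Usets unfolding A_def by measurable
  have bound: "measure M (A - U) \<le> 2 / 2 ^ m" for m
  proof -
    have "A - U \<subseteq> (Yf Ni - R m (kN m)) \<union> (R m (kM m) - Yf Mi)"
    proof
      fix x assume x: "x \<in> A - U"
      show "x \<in> (Yf Ni - R m (kN m)) \<union> (R m (kM m) - Yf Mi)"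
      proof (rule ccontr)
        assume "\<not> ?thesis"
        then have xN: "x \<in> R m (kN m)" and xM: "x \<notin> R m (kM m)" using x unfolding A_def by auto
        define j where "j = (LEAST j. x \<in> R m j)"
        have xj: "x \<in> R m j" unfolding j_def by (rule LeastI[of "\<lambda>j. x \<in> R m j", OF xN])
        have jle: "j \<le> kN m" unfolding j_def by (rule Least_le[of "\<lambda>j. x \<in> R m j", OF xN])
        have jgt: "kM m < j" using R_mono[of j "kM m" m] xj xM by (cases "j \<le> kM m") auto
        have xj1: "x \<notin> R m (j - 1)" unfolding j_def
          by (rule not_less_Least) (use jgt j_def in auto)
        have a1: "1 \<le> j" "j \<le> 2^m" using jgt jle kN_le[of m] by auto
        have a2: "R m j \<subseteq> Yf Ni" using R_mono[OF jle, of m] kN_sub[of m] by blast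
        have "kM m \<le> j - 1" using jgt by simp
        then have a3: "Yf Mi \<subseteq> R m (j - 1)" using R_mono[of "kM m" "j - 1" m] kM_sub[of m] by blast
        have "ins m j" unfolding ins_def using a1 a2 a3 by blast
        then have "x \<in> U" using key[of m j] xj xj1 unfolding B_def by auto
        then show False using x by auto
      qed
    qed
    then have "measure M (A - U) \<le> measure M ((Yf Ni - R m (kN m)) \<union> (R m (kM m) - Yf Mi))"
      by (intro finite_measure_mono) auto
    also have "\<dots> \<le> measure M (Yf Ni - R m (kN m)) + measure M (R m (kM m) - Yf Mi)"
      by (intro measure_Un_le) auto
    also have "\<dots> \<le> 1 / 2 ^ m + 1 / 2 ^ m"
    proof (intro add_mono)
      show "measure M (Yf Ni - R m (kN m)) \<le> 1 / 2 ^ m"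
      proof (cases "kN m = 2 ^ m")
        case True
        then have "Yf Ni - R m (kN m) = {}" using R_top[of m "kN m"] sets.sets_into_space[OF Yf_sets] by auto
        then have "measure M (Yf Ni - R m (kN m)) = 0" by (metis measure_empty)
        then show ?thesis by simp
      next
        case False
        then have lt: "kN m + 1 \<le> 2 ^ m" using kN_le[of m] by simp
        then have "\<not> R m (kN m + 1) \<subseteq> Yf Ni" using kN_max[of "kN m + 1" m] by auto
        then have "Yf Ni \<subseteq> R m (kN m + 1)" using R_comp by blast
        then have "Yf Ni - R m (kN m) \<subseteq> B m (kN m + 1)" unfolding B_def by auto
        then have "measure M (Yf Ni - R m (kN m)) \<le> measure M (B m (kN m + 1))"
          by (intro finite_measure_mono) auto
        then show ?thesis using B_measure[of "kN m + 1" m] lt by simp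
      qed
      show "measure M (R m (kM m) - Yf Mi) \<le> 1 / 2 ^ m"
      proof (cases "kM m = 0")
        case True then show ?thesis by simp
      next
        case False
        then have "\<not> Yf Mi \<subseteq> R m (kM m - 1)" using kM_min[of "kM m - 1" m] by simp
        then have "R m (kM m - 1) \<subseteq> Yf Mi" using R_comp by blast
        then have "R m (kM m) - Yf Mi \<subseteq> B m (kM m)" unfolding B_def by auto
        then have "measure M (R m (kM m) - Yf Mi) \<le> measure M (B m (kM m))"
          by (intro finite_measure_mono) auto
        then show ?thesis using B_measure[of "kM m" m] kM_le[of m] False by simp
      qed
    qed
    finally show ?thesis by simp
  qed
  have "(\<lambda>m. 2 / 2 ^ m :: real) \<longlonglongrightarrow> 0" by (rule LIMSEQ_divide_realpow_zero) simp
  then have "measure M (A - U) \<le> 0" using bound by (intro LIMSEQ_le_const) auto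
  then have "measure M (A - U) = 0" by (simp add: order_antisym)
  then have "A - U \<in> null_sets M" using AU by (intro null_setsI) (simp add: emeasure_eq_measure)
  moreover have "(A - U) \<union> (U - A) = A - U" using U_sub by auto
  ultimately have "(A - U) \<union> (U - A) \<in> null_sets M" by simp
  moreover have "\<forall>m \<in> N1. jj1 m \<in> {1..2^m}" unfolding N1_def jj1_def ins_def by auto
  moreover have "\<forall>m \<in> N2. kN m \<in> {1..2^m}" unfolding N2_def ins_def by auto
  ultimately show ?thesis unfolding Let_def A_def U_def by blast
qed

end

theorem lemma3p1:
  fixes M :: "'a measure" and Yf :: "int \<Rightarrow> 'a set"
  assumes "prob_space M"
    and "divisible_measure M"
    and "filtration_of M Yf"
  shows "\<exists>B :: nat \<Rightarrow> nat \<Rightarrow> 'a set.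
    (\<forall>m. (\<forall>j \<in> {1..2^m}. B m j \<in> sets M)
       \<and> (\<forall>j \<in> {1..2^m}. \<forall>k \<in> {1..2^m}. j \<noteq> k \<longrightarrow> B m j \<inter> B m k = {})
       \<and> (\<Union>j \<in> {1..2^m}. B m j) = space M)
  \<and> (\<forall>m. \<forall>j \<in> {1..2^m}. \<exists>j1 \<in> {1..2^(m+1)}. \<exists>j2 \<in> {1..2^(m+1)}.
        j1 \<noteq> j2 \<and> B m j = B (m+1) j1 \<union> B (m+1) j2)
  \<and> (\<forall>m. \<forall>j \<in> {1..2^m}. measure M (B m j) = 1 / 2^m)
  \<and> (\<forall>Mi Ni :: int. \<exists>(N1 :: nat set) (N2 :: nat set) (jj1 :: nat \<Rightarrow> nat) (jj2 :: nat \<Rightarrow> nat).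
        (\<forall>m \<in> N1. jj1 m \<in> {1..2^m}) \<and> (\<forall>m \<in> N2. jj2 m \<in> {1..2^m}) \<and>
        (let A = Yf Ni - Yf Mi;
             U = (\<Union>m \<in> N1. B m (jj1 m)) \<union> (\<Union>m \<in> N2. B m (jj2 m))
         in (A - U) \<union> (U - A) \<in> null_sets M))"
proof -
  have "dsetting M Yf" using assms by (simp add: dsetting_def dsetting_axioms_def)
  then interpret dsetting M Yf .
  have P1: "\<forall>m. (\<forall>j \<in> {1..2^m}. B m j \<in> sets M)
       \<and> (\<forall>j \<in> {1..2^m}. \<forall>k \<in> {1..2^m}. j \<noteq> k \<longrightarrow> B m j \<inter> B m k = {})
       \<and> (\<Union>j \<in> {1..2^m}. B m j) = space M"
    using B_disj B_Union R_top by auto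
  have P2: "\<forall>m. \<forall>j \<in> {1..2^m}. \<exists>j1 \<in> {1..2^(m+1)}. \<exists>j2 \<in> {1..2^(m+1)}.
        j1 \<noteq> j2 \<and> B m j = B (m+1) j1 \<union> B (m+1) j2"
  proof (intro allI ballI)
    fix m j assume j: "j \<in> {1..(2::nat)^m}"
    then have "2 * j - 1 \<in> {1..2^(m+1)}" "2 * j \<in> {1..2^(m+1)}" "2 * j - 1 \<noteq> 2 * j" by auto
    moreover have "B m j = B (m+1) (2 * j - 1) \<union> B (m+1) (2 * j)" using B_split[of j m] j by simp
    ultimately show "\<exists>j1 \<in> {1..2^(m+1)}. \<exists>j2 \<in> {1..2^(m+1)}.
        j1 \<noteq> j2 \<and> B m j = B (m+1) j1 \<union> B (m+1) j2" by blast
  qed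
  have P3: "\<forall>m. \<forall>j \<in> {1..2^m}. measure M (B m j) = 1 / 2^m"
    using B_measure by auto
  have P4: "\<forall>Mi Ni :: int. \<exists>(N1 :: nat set) (N2 :: nat set) (jj1 :: nat \<Rightarrow> nat) (jj2 :: nat \<Rightarrow> nat).
        (\<forall>m \<in> N1. jj1 m \<in> {1..2^m}) \<and> (\<forall>m \<in> N2. jj2 m \<in> {1..2^m}) \<and>
        (let A = Yf Ni - Yf Mi;
             U = (\<Union>m \<in> N1. B m (jj1 m)) \<union> (\<Union>m \<in> N2. B m (jj2 m))
         in (A - U) \<union> (U - A) \<in> null_sets M)"
    using part4 by blast
  show ?thesis using P1 P2 P3 P4 by (intro exI[of _ B]) blast
qed

end
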